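(* There is an absolute constant $c>0$ such that for every sufficiently small $\varepsilon>0$ and every $u\in V$, $d^2_u-k_u\le\frac{c}{\varepsilon^2}(w_u-k_u)$.
   Context: A Correlation Clustering instance consists of a finite vertex set $V$ and a partition $E^+\uplus E^-=\binom V2$ of unordered pairs of distinct vertices into $+$edges and $-$edges. $\mathcal K$ is a partition of $V$ into atoms, and every pair of distinct vertices in a common atom is a $+$edge. For $u\in V$, $K_u$ is the atom containing $u$ and $k_u=|K_u|$. For $u,v\in V$ (possibly equal), $w_{uv}=\frac1{k_uk_v}\sum_{u'\in K_u,v'\in K_v}\mathbf 1[u'v'\text{ is a }+\text{edge or }u'=v']\in[0,1]$, and $w_u=\sum_{v\in V}w_{uv}$. Let $E^1=\{uv:\varepsilon w_v<w_u<w_v/\varepsilon\}$ and $N^1_u=\{v:uv\in E^1\}$ (unordered pairs, $u=v$ allowed). Let $E^2=\{uv: K_u=K_v,\ \text{or}\ uv\in E^1\text{ and }\sum_{p\in N^1_u\cap N^1_v}w_{up}w_{vp}>\varepsilon(w_u+w_v)\}$, and $d^2_u=|\{v\in V: uv\in E^2\}|$. *)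

theory Defs
  imports Complex_Main "HOL-Library.Disjoint_Sets"
begin

text \<open>A Correlation Clustering instance: finite vertex set V (vertices are naturals),
  a symmetric predicate P on distinct pairs of V (P u v means uv is a +edge,
  otherwise a -edge), and a partition K of V into atoms.\<close>

definition cc_instance :: "nat set \<Rightarrow> (nat \<Rightarrow> nat \<Rightarrow> bool) \<Rightarrow> nat set set \<Rightarrow> bool" where
  "cc_instance V P K \<longleftrightarrow> finite V \<and> (\<forall>u\<in>V. \<forall>v\<in>V. P u v = P v u) \<and> partition_on V K
     \<and> (\<forall>A\<in>K. \<forall>x\<in>A. \<forall>y\<in>A. x \<noteq> y \<longrightarrow> P x y)"

definition atom :: "nat set set \<Rightarrow> nat \<Rightarrow> nat set" where
  "atom K u = (THE A. A \<in> K \<and> u \<in> A)"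

definition katom :: "nat set set \<Rightarrow> nat \<Rightarrow> nat" where
  "katom K u = card (atom K u)"

definition wpair :: "(nat \<Rightarrow> nat \<Rightarrow> bool) \<Rightarrow> nat set set \<Rightarrow> nat \<Rightarrow> nat \<Rightarrow> real" where
  "wpair P K u v = (1 / (real (katom K u) * real (katom K v))) *
     (\<Sum>u'\<in>atom K u. \<Sum>v'\<in>atom K v. if P u' v' \<or> u' = v' then 1 else 0)"

definition wvert :: "nat set \<Rightarrow> (nat \<Rightarrow> nat \<Rightarrow> bool) \<Rightarrow> nat set set \<Rightarrow> nat \<Rightarrow> real" where
  "wvert V P K u = (\<Sum>v\<in>V. wpair P K u v)"

definition E1 :: "real \<Rightarrow> nat set \<Rightarrow> (nat \<Rightarrow> nat \<Rightarrow> bool) \<Rightarrow> nat set set \<Rightarrow> nat \<Rightarrow> nat \<Rightarrow> bool" where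
  "E1 \<epsilon> V P K u v \<longleftrightarrow> \<epsilon> * wvert V P K v < wvert V P K u \<and> wvert V P K u < wvert V P K v / \<epsilon>"

definition N1 :: "real \<Rightarrow> nat set \<Rightarrow> (nat \<Rightarrow> nat \<Rightarrow> bool) \<Rightarrow> nat set set \<Rightarrow> nat \<Rightarrow> nat set" where
  "N1 \<epsilon> V P K u = {v \<in> V. E1 \<epsilon> V P K u v}"

definition E2 :: "real \<Rightarrow> nat set \<Rightarrow> (nat \<Rightarrow> nat \<Rightarrow> bool) \<Rightarrow> nat set set \<Rightarrow> nat \<Rightarrow> nat \<Rightarrow> bool" where
  "E2 \<epsilon> V P K u v \<longleftrightarrow> atom K u = atom K v \<or>
     (E1 \<epsilon> V P K u v \<and>
      (\<Sum>p\<in>N1 \<epsilon> V P K u \<inter> N1 \<epsilon> V P K v. wpair P K u p * wpair P K v p)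
        > \<epsilon> * (wvert V P K u + wvert V P K v))"

definition d2 :: "real \<Rightarrow> nat set \<Rightarrow> (nat \<Rightarrow> nat \<Rightarrow> bool) \<Rightarrow> nat set set \<Rightarrow> nat \<Rightarrow> nat" where
  "d2 \<epsilon> V P K u = card {v \<in> V. E2 \<epsilon> V P K u v}"

end

theory Submission
  imports Defs
begin

lemma atom_mem:
  assumes cc: "cc_instance V P K" and u: "u \<in> V"
  shows "atom K u \<in> K \<and> u \<in> atom K u"
proof -
  have pK: "partition_on V K" using cc by (simp add: cc_instance_def)
  obtain A where A: "A \<in> K" "u \<in> A" using partition_onD1[OF pK] u by blast
  have uniq: "B = A" if "B \<in> K" "u \<in> B" for B
  proof (rule ccontr)
    assume "B \<noteq> A"
    then have "B \<inter> A = {}" using partition_onD2[OF pK] A that by (meson disjointD)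
    then show False using A that by blast
  qed
  have "(THE A. A \<in> K \<and> u \<in> A) = A"
    using A uniq by (intro the_equality) blast+
  then show ?thesis using A by (simp add: atom_def)
qed

lemma atom_sub:
  assumes cc: "cc_instance V P K" and u: "u \<in> V"
  shows "atom K u \<subseteq> V" "finite (atom K u)" "katom K u \<ge> 1"
proof -
  have pK: "partition_on V K" and fV: "finite V" using cc by (auto simp: cc_instance_def)
  show s: "atom K u \<subseteq> V" using atom_mem[OF cc u] partition_onD1[OF pK] by blast
  show f: "finite (atom K u)" using s fV finite_subset by blast
  have "atom K u \<noteq> {}" using atom_mem[OF cc u] by blast
  then have "card (atom K u) > 0" using f by (simp add: card_gt_0_iff)
  then show "katom K u \<ge> 1" unfolding katom_def by simp
qed

lemma atom_eq:
  assumes cc: "cc_instance V P K" and u: "u \<in> V" and v: "v \<in> atom K u"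
  shows "atom K v = atom K u"
proof -
  have pK: "partition_on V K" using cc by (simp add: cc_instance_def)
  have vV: "v \<in> V" using atom_sub[OF cc u] v by blast
  show ?thesis
  proof (rule ccontr)
    assume "atom K v \<noteq> atom K u"
    then have "atom K v \<inter> atom K u = {}"
      using partition_onD2[OF pK] atom_mem[OF cc u] atom_mem[OF cc vV] by (meson disjointD)
    then show False using atom_mem[OF cc vV] v by blast
  qed
qed

lemma wpair_same:
  assumes cc: "cc_instance V P K" and u: "u \<in> V" and e: "atom K v = atom K u"
  shows "wpair P K u v = 1"
proof -
  let ?A = "atom K u"
  have hK: "\<forall>A\<in>K. \<forall>x\<in>A. \<forall>y\<in>A. x \<noteq> y \<longrightarrow> P x y" using cc
    unfolding cc_instance_def by simp
  have AK: "?A \<in> K" using atom_mem[OF cc u] by simp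
  have h: "\<forall>x\<in>?A. \<forall>y\<in>?A. x \<noteq> y \<longrightarrow> P x y" using hK AK by (rule bspec)
  have "(\<Sum>u'\<in>?A. \<Sum>v'\<in>?A. if P u' v' \<or> u' = v' then 1 else 0) = (\<Sum>u'\<in>?A. \<Sum>v'\<in>?A. (1::real))"
  proof (intro sum.cong refl)
    fix x y assume "x \<in> ?A" "y \<in> ?A"
    then have "P x y \<or> x = y" using h by blast
    then show "(if P x y \<or> x = y then 1 else 0) = (1::real)" by simp
  qed
  also have "\<dots> = real (katom K u) * real (katom K u)" by (simp add: katom_def)
  finally have s: "(\<Sum>u'\<in>?A. \<Sum>v'\<in>?A. if P u' v' \<or> u' = v' then 1 else 0) = real (katom K u) * real (katom K u)" .
  have k: "real (katom K u) \<ge> 1" using atom_sub(3)[OF cc u] by simp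
  have "wpair P K u v = (1 / (real (katom K u) * real (katom K u))) *
     (\<Sum>u'\<in>?A. \<Sum>v'\<in>?A. if P u' v' \<or> u' = v' then 1 else 0)"
    unfolding wpair_def katom_def e ..
  also have "\<dots> = 1" unfolding s using k by simp
  finally show ?thesis .
qed

lemma wpair_nonneg: "wpair P K u v \<ge> 0"
  unfolding wpair_def by (intro mult_nonneg_nonneg sum_nonneg) auto

lemma wpair_le1:
  assumes cc: "cc_instance V P K" and u: "u \<in> V" and v: "v \<in> V"
  shows "wpair P K u v \<le> 1"
proof -
  let ?S = "(\<Sum>u'\<in>atom K u. \<Sum>v'\<in>atom K v. if P u' v' \<or> u' = v' then 1 else (0::real))"
  have "?S \<le> (\<Sum>u'\<in>atom K u. \<Sum>v'\<in>atom K v. (1::real))"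
    by (intro sum_mono) simp
  also have "\<dots> = real (katom K u) * real (katom K v)" by (simp add: katom_def)
  finally have s: "?S \<le> real (katom K u) * real (katom K v)" .
  have a: "real (katom K u) * real (katom K v) > 0"
    using atom_sub(3)[OF cc u] atom_sub(3)[OF cc v] by simp
  have "wpair P K u v = ?S / (real (katom K u) * real (katom K v))"
    unfolding wpair_def by simp
  also have "\<dots> \<le> 1" using s a by (simp add: divide_le_eq)
  finally show ?thesis .
qed

lemma wpair_sym:
  assumes cc: "cc_instance V P K" and u: "u \<in> V" and v: "v \<in> V"
  shows "wpair P K u v = wpair P K v u"
proof -
  have sym: "\<forall>x\<in>V. \<forall>y\<in>V. P x y = P y x" using cc by (simp add: cc_instance_def)
  have "(\<Sum>u'\<in>atom K u. \<Sum>v'\<in>atom K v. if P u' v' \<or> u' = v' then 1 else (0::real))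
     = (\<Sum>v'\<in>atom K v. \<Sum>u'\<in>atom K u. if P u' v' \<or> u' = v' then 1 else 0)"
    by (rule sum.swap)
  also have "\<dots> = (\<Sum>v'\<in>atom K v. \<Sum>u'\<in>atom K u. if P v' u' \<or> v' = u' then 1 else 0)"
  proof (intro sum.cong refl)
    fix x y assume "x \<in> atom K v" "y \<in> atom K u"
    then have "x \<in> V" "y \<in> V" using atom_sub(1)[OF cc u] atom_sub(1)[OF cc v] by auto
    then have "P y x = P x y" using sym by blast
    then show "(if P y x \<or> y = x then 1 else 0) = (if P x y \<or> x = y then 1 else (0::real))" by auto
  qed
  finally show ?thesis by (simp add: wpair_def mult.commute)
qed

lemma wpair_atom: "atom K p = atom K u \<Longrightarrow> wpair P K v p = wpair P K v u"
  by (simp add: wpair_def katom_def)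

lemma wvert_split:
  assumes cc: "cc_instance V P K" and u: "u \<in> V"
  shows "wvert V P K u = real (katom K u) + (\<Sum>v\<in>V - atom K u. wpair P K u v)"
proof -
  have fV: "finite V" using cc by (simp add: cc_instance_def)
  have s: "atom K u \<subseteq> V" using atom_sub[OF cc u] by blast
  have "wvert V P K u = (\<Sum>v\<in>atom K u. wpair P K u v) + (\<Sum>v\<in>V - atom K u. wpair P K u v)"
    unfolding wvert_def using sum.subset_diff[OF s fV, of "wpair P K u"] by linarith
  also have "(\<Sum>v\<in>atom K u. wpair P K u v) = (\<Sum>v\<in>atom K u. 1)"
    by (intro sum.cong refl wpair_same[OF cc u] atom_eq[OF cc u])
  finally show ?thesis by (simp add: katom_def)
qed


lemma main_bound:
  assumes cc: "cc_instance V P K" and u: "u \<in> V" and e0: "0 < \<epsilon>" and e1: "\<epsilon> < 1"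
  shows "real (d2 \<epsilon> V P K u) - real (katom K u)
          \<le> 4 / \<epsilon>^2 * (wvert V P K u - real (katom K u))"
proof -
  let ?w = "wpair P K" and ?W = "wvert V P K" and ?Ku = "atom K u" and ?k = "real (katom K u)"
  have fV: "finite V" using cc by (simp add: cc_instance_def)
  have KuV: "?Ku \<subseteq> V" and fKu: "finite ?Ku" and k1: "?k \<ge> 1" using atom_sub[OF cc u] by auto
  define x where "x = (\<Sum>v\<in>V - ?Ku. ?w u v)"
  have Wu: "?W u = ?k + x" unfolding x_def by (rule wvert_split[OF cc u])
  have x0: "x \<ge> 0" unfolding x_def by (intro sum_nonneg wpair_nonneg)
  have Wpos: "?W u > 0" using Wu k1 x0 by linarith
  have Wnn: "?W v \<ge> 0" for v unfolding wvert_def by (intro sum_nonneg wpair_nonneg)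
  define N where "N = N1 \<epsilon> V P K u - ?Ku"
  have NV: "N \<subseteq> V - ?Ku" unfolding N_def N1_def by auto
  have fN: "finite N" using NV fV finite_subset by blast
  define f where "f v = (\<Sum>p\<in>N. ?w u p * ?w v p)" for v
  have fnn: "f v \<ge> 0" for v unfolding f_def by (intro sum_nonneg mult_nonneg_nonneg wpair_nonneg)
  define S where "S = {v\<in>V. E2 \<epsilon> V P K u v}"
  define SA where "SA = {v \<in> V - ?Ku. ?w u v \<ge> \<epsilon>/2}"
  define SB where "SB = {v \<in> V - ?Ku. ?w u v < \<epsilon>/2 \<and> E2 \<epsilon> V P K u v}"
  have fSA: "finite SA" unfolding SA_def using fV by simp
  have fSB: "finite SB" unfolding SB_def using fV by simp
  have "S \<subseteq> ?Ku \<union> SA \<union> SB" unfolding S_def SA_def SB_def by auto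
  then have "card S \<le> card (?Ku \<union> SA \<union> SB)" using fKu fSA fSB by (intro card_mono) auto
  also have "\<dots> \<le> card (?Ku \<union> SA) + card SB" by (rule card_Un_le)
  also have "\<dots> \<le> card ?Ku + card SA + card SB" using card_Un_le[of ?Ku SA] by linarith
  finally have cardS: "real (card S) \<le> ?k + real (card SA) + real (card SB)"
    unfolding katom_def by linarith
  have "real (card SA) * (\<epsilon>/2) = (\<Sum>v\<in>SA. \<epsilon>/2)" by simp
  also have "\<dots> \<le> (\<Sum>v\<in>SA. ?w u v)" unfolding SA_def by (intro sum_mono) auto
  also have "\<dots> \<le> x" unfolding x_def using fV
    by (intro sum_mono2) (auto simp: SA_def wpair_nonneg)
  finally have bA: "real (card SA) * (\<epsilon>/2) \<le> x" .
  have fB: "\<epsilon> * ?W u / 2 < f v" if v: "v \<in> SB" for v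
  proof -
    have vV: "v \<in> V" and vK: "v \<notin> ?Ku" and wl: "?w u v < \<epsilon>/2" and E: "E2 \<epsilon> V P K u v"
      using v unfolding SB_def by auto
    have "atom K u \<noteq> atom K v" using atom_mem[OF cc vV] vK by auto
    then have gt: "(\<Sum>p\<in>N1 \<epsilon> V P K u \<inter> N1 \<epsilon> V P K v. ?w u p * ?w v p) > \<epsilon> * (?W u + ?W v)"
      using E unfolding E2_def by auto
    define M where "M = N1 \<epsilon> V P K u \<inter> N1 \<epsilon> V P K v"
    have MV: "M \<subseteq> V" unfolding M_def N1_def by auto
    have fM: "finite M" using MV fV finite_subset by blast
    have split: "(\<Sum>p\<in>M. ?w u p * ?w v p) = (\<Sum>p\<in>M \<inter> ?Ku. ?w u p * ?w v p) + (\<Sum>p\<in>M - ?Ku. ?w u p * ?w v p)"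
      using fM by (rule sum.Int_Diff)
    have "(\<Sum>p\<in>M \<inter> ?Ku. ?w u p * ?w v p) = (\<Sum>p\<in>M \<inter> ?Ku. ?w u v)"
    proof (rule sum.cong[OF refl])
      fix p assume p: "p \<in> M \<inter> ?Ku"
      have ap: "atom K p = atom K u" using atom_eq[OF cc u] p by blast
      have "?w u p = 1" by (rule wpair_same[OF cc u ap])
      moreover have "?w v p = ?w v u" using ap by (rule wpair_atom)
      moreover have "?w v u = ?w u v" using wpair_sym[OF cc u vV] by simp
      ultimately show "?w u p * ?w v p = ?w u v" by simp
    qed
    also have "\<dots> = real (card (M \<inter> ?Ku)) * ?w u v" by simp
    also have "\<dots> \<le> ?k * ?w u v"
    proof (rule mult_right_mono)
      show "real (card (M \<inter> ?Ku)) \<le> ?k" unfolding katom_def using fKu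
        by (simp add: card_mono)
    qed (rule wpair_nonneg)
    also have "\<dots> \<le> ?k * (\<epsilon>/2)" using wl k1 by (intro mult_left_mono) auto
    also have "\<dots> \<le> ?W u * (\<epsilon>/2)" using Wu x0 e0 by (intro mult_right_mono) auto
    finally have p1: "(\<Sum>p\<in>M \<inter> ?Ku. ?w u p * ?w v p) \<le> ?W u * (\<epsilon>/2)" .
    have "M - ?Ku \<subseteq> N" unfolding M_def N_def by auto
    then have p2: "(\<Sum>p\<in>M - ?Ku. ?w u p * ?w v p) \<le> f v" unfolding f_def using fN
      by (intro sum_mono2) (auto intro: mult_nonneg_nonneg wpair_nonneg)
    have "\<epsilon> * ?W v \<ge> 0" using e0 Wnn[of v] by simp
    then show ?thesis using gt split p1 p2 unfolding M_def by (simp add: algebra_simps)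
  qed
  have "real (card SB) * (\<epsilon> * ?W u / 2) = (\<Sum>v\<in>SB. \<epsilon> * ?W u / 2)" by simp
  also have "\<dots> \<le> (\<Sum>v\<in>SB. f v)" using fB by (intro sum_mono) (simp add: less_imp_le)
  also have "\<dots> \<le> (\<Sum>v\<in>V. f v)" using fV fnn by (intro sum_mono2) (auto simp: SB_def)
  also have "\<dots> = (\<Sum>p\<in>N. ?w u p * (\<Sum>v\<in>V. ?w v p))"
    unfolding f_def by (simp add: sum.swap[of _ V N] sum_distrib_left)
  also have "\<dots> = (\<Sum>p\<in>N. ?w u p * ?W p)"
  proof (rule sum.cong[OF refl])
    fix p assume "p \<in> N"
    then have pV: "p \<in> V" using NV by auto
    have "(\<Sum>v\<in>V. ?w v p) = (\<Sum>v\<in>V. ?w p v)" by (rule sum.cong[OF refl]) (use wpair_sym[OF cc _ pV] in auto)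
    then show "?w u p * (\<Sum>v\<in>V. ?w v p) = ?w u p * ?W p" by (simp add: wvert_def)
  qed
  also have "\<dots> \<le> (\<Sum>p\<in>N. ?w u p * (?W u / \<epsilon>))"
  proof (rule sum_mono)
    fix p assume "p \<in> N"
    then have "\<epsilon> * ?W p < ?W u" unfolding N_def N1_def E1_def by auto
    then have "?W p \<le> ?W u / \<epsilon>" using e0 by (simp add: field_simps)
    then show "?w u p * ?W p \<le> ?w u p * (?W u / \<epsilon>)" by (intro mult_left_mono wpair_nonneg)
  qed
  also have "\<dots> = (\<Sum>p\<in>N. ?w u p) * (?W u / \<epsilon>)" by (rule sum_distrib_right[symmetric])
  also have "\<dots> \<le> x * (?W u / \<epsilon>)"
  proof (rule mult_right_mono)
    show "(\<Sum>p\<in>N. ?w u p) \<le> x" unfolding x_def using fV NV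
      by (intro sum_mono2) (auto simp: wpair_nonneg)
    show "0 \<le> ?W u / \<epsilon>" using Wpos e0 by simp
  qed
  finally have bB0: "real (card SB) * (\<epsilon> * ?W u / 2) \<le> x * (?W u / \<epsilon>)" .
  have bB: "real (card SB) * (\<epsilon> / 2) \<le> x / \<epsilon>"
  proof -
    have "(real (card SB) * (\<epsilon> / 2)) * ?W u \<le> (x / \<epsilon>) * ?W u" using bB0 by (simp add: field_simps)
    then show ?thesis by (rule mult_right_le_imp_le[OF _ Wpos])
  qed
  have SB2: "real (card SB) \<le> 2 * x / \<epsilon>^2" using bB e0 by (simp add: field_simps power2_eq_square)
  have SA1: "real (card SA) \<le> 2 * x / \<epsilon>" using bA e0 by (simp add: field_simps)
  have "2 * x / \<epsilon> \<le> 2 * x / \<epsilon>^2"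
  proof -
    have "\<epsilon>^2 \<le> \<epsilon>" using e0 e1 by (simp add: power2_eq_square)
    then show ?thesis using x0 e0 by (intro divide_left_mono) auto
  qed
  then have SA2: "real (card SA) \<le> 2 * x / \<epsilon>^2" using SA1 by linarith
  have d: "d2 \<epsilon> V P K u = card S" unfolding d2_def S_def ..
  have "4 / \<epsilon>^2 * (?W u - ?k) = 2 * x / \<epsilon>^2 + 2 * x / \<epsilon>^2" using Wu by (simp add: field_simps)
  then show ?thesis using cardS SA2 SB2 d by linarith
qed

theorem lemma12:
  "\<exists>c>0. \<exists>\<epsilon>0>0. \<forall>\<epsilon>::real. 0 < \<epsilon> \<and> \<epsilon> < \<epsilon>0 \<longrightarrow>
     (\<forall>V P K u. cc_instance V P K \<and> u \<in> V \<longrightarrow>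
        real (d2 \<epsilon> V P K u) - real (katom K u)
          \<le> c / \<epsilon>^2 * (wvert V P K u - real (katom K u)))"
proof -
  have "\<forall>\<epsilon>::real. 0 < \<epsilon> \<and> \<epsilon> < 1 \<longrightarrow>
     (\<forall>V P K u. cc_instance V P K \<and> u \<in> V \<longrightarrow>
        real (d2 \<epsilon> V P K u) - real (katom K u)
          \<le> 4 / \<epsilon>^2 * (wvert V P K u - real (katom K u)))"
    using main_bound by blast
  then show ?thesis
    apply (rule_tac x="4::real" in exI)
    apply (rule conjI, simp)
    apply (rule_tac x="1::real" in exI)
    apply simp
    done
qed

end
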